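(* The problem of computing the core number of a fixed designated vertex $v$ (on incremental graph streams) admits an extendable bitwise AND gadget with $v(d)=O(d^2)$ and $t(d)=O(d^4)$.
   Context: The core number of a vertex $v$ in $G$ is the largest $k$ such that $v$ belongs to a subgraph of $G$ with minimum degree at least $k$. Let $\zeta\in\mathbb N$ be a fixed constant and $m=\zeta d$. An extendable bitwise AND gadget for a graph function $g$ (here real-valued: the core number of the designated vertex $v$, which is a vertex of the gadget graph) consists of positive increasing functions $v,t:\mathbb N\to\mathbb N$ and, for each $d$: an initial graph $H_{\mathrm{init}}=(V,E_0)$ with $|V|=v(d)$; edges $e_1,\dots,e_d\in\binom V2$, defining $H^1_x=H_{\mathrm{init}}\cup\{e_i: x_i=1\}$ for $x\in\{0,1\}^d$; and for every sequence of queries $q^1,\dots,q^m\in\{0,1\}^d$, edge sets $S^1,T^1,\dots,S^m,T^m$ and functions $\mathrm{dec}_j:\mathrm{Range}(g)\to\mathbb R$ (depending on the queries but not on $x$) such that: (a) each $\mathrm{dec}_j$ is $1$-Lipschitz; (b) with $Q^j_x=H^j_x\cup S^j$, $\mathrm{dec}_j(g(Q^j_x))-\mathrm{dec}_j(g(H^j_x))=\langle x,q^j\rangle$ for all $x$; (c) $H^{j+1}_x=Q^j_x\cup T^j$; and the total number of edge insertions $|E_0|+d+\sum_j(|S^j|+|T^j|)$ is at most $t(d)$. For real-valued $g$ one may take $\mathrm{dec}_j=\mathrm{id}$. *)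

theory Defs
  imports Complex_Main "HOL-Library.Landau_Symbols"
begin

definition edges_on :: "nat set \<Rightarrow> nat set set" where
  "edges_on V = {e. e \<subseteq> V \<and> card e = 2}"

definition in_min_deg_subgraph :: "nat set \<Rightarrow> nat set set \<Rightarrow> nat \<Rightarrow> nat \<Rightarrow> bool" where
  "in_min_deg_subgraph V E v k \<longleftrightarrow>
     (\<exists>S F. S \<subseteq> V \<and> F \<subseteq> E \<and> (\<forall>e\<in>F. e \<subseteq> S) \<and> v \<in> S \<and>
            (\<forall>u\<in>S. k \<le> card {e\<in>F. u \<in> e}))"

definition core_number :: "nat set \<Rightarrow> nat set set \<Rightarrow> nat \<Rightarrow> nat" where
  "core_number V E v = (GREATEST k. in_min_deg_subgraph V E v k)"

definition bit_inner :: "nat \<Rightarrow> (nat \<Rightarrow> bool) \<Rightarrow> (nat \<Rightarrow> bool) \<Rightarrow> real" where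
  "bit_inner d x q = (\<Sum>i<d. of_bool (x i) * of_bool (q i))"

text \<open>Graph sequence (0-indexed: H x 0 = H^1_x, H x (Suc j) = Q^j_x \<union> T^j).\<close>
fun gadget_H :: "nat set set \<Rightarrow> (nat \<Rightarrow> nat set) \<Rightarrow> nat \<Rightarrow> (nat \<Rightarrow> nat set set)
                 \<Rightarrow> (nat \<Rightarrow> nat set set) \<Rightarrow> (nat \<Rightarrow> bool) \<Rightarrow> nat \<Rightarrow> nat set set" where
  "gadget_H E0 e d S T x 0 = E0 \<union> {e i | i. i < d \<and> x i}"
| "gadget_H E0 e d S T x (Suc j) = gadget_H E0 e d S T x j \<union> S j \<union> T j"

definition gadget_Q :: "nat set set \<Rightarrow> (nat \<Rightarrow> nat set) \<Rightarrow> nat \<Rightarrow> (nat \<Rightarrow> nat set set)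
                 \<Rightarrow> (nat \<Rightarrow> nat set set) \<Rightarrow> (nat \<Rightarrow> bool) \<Rightarrow> nat \<Rightarrow> nat set set" where
  "gadget_Q E0 e d S T x j = gadget_H E0 e d S T x j \<union> S j"

text \<open>Extendable bitwise AND gadget for a graph function g (real valued; g V E w is the
  value on graph (V,E) with designated vertex w), with m = zeta * d queries.
  Queries are indexed 0..m-1.\<close>
definition ext_AND_gadget ::
  "(nat set \<Rightarrow> nat set set \<Rightarrow> nat \<Rightarrow> real) \<Rightarrow> nat \<Rightarrow> (nat \<Rightarrow> nat) \<Rightarrow> (nat \<Rightarrow> nat) \<Rightarrow> bool" where
  "ext_AND_gadget g \<zeta> nv t \<longleftrightarrow>
    (\<forall>d. 0 < nv d \<and> 0 < t d) \<and> mono nv \<and> mono t \<and>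
    (\<forall>d. \<exists>V E0 e w.
        finite V \<and> card V = nv d \<and> w \<in> V \<and> E0 \<subseteq> edges_on V \<and>
        (\<forall>i<d. e i \<in> edges_on V) \<and>
        (\<forall>q :: nat \<Rightarrow> nat \<Rightarrow> bool. \<exists>S T dec.
            (\<forall>j < \<zeta> * d. S j \<subseteq> edges_on V \<and> T j \<subseteq> edges_on V) \<and>
            (\<forall>j < \<zeta> * d. \<forall>a \<in> {g V' E' w' | V' E' w'. True}. \<forall>b \<in> {g V' E' w' | V' E' w'. True}.
                 \<bar>dec j a - dec j b\<bar> \<le> \<bar>a - b\<bar>) \<and>
            (\<forall>j < \<zeta> * d. \<forall>x :: nat \<Rightarrow> bool.
                 dec j (g V (gadget_Q E0 e d S T x j) w) - dec j (g V (gadget_H E0 e d S T x j) w)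
                   = bit_inner d x (q j)) \<and>
            card E0 + d + (\<Sum>j < \<zeta> * d. card (S j) + card (T j)) \<le> t d))"

end

theory Submission
  imports Defs
begin

lemma core_eqI:
  assumes "in_min_deg_subgraph V E w r"
    and "\<And>k. in_min_deg_subgraph V E w k \<Longrightarrow> k \<le> r"
  shows "core_number V E w = r"
  unfolding core_number_def by (rule Greatest_equality) (use assms in auto)

lemma core_upper:
  assumes B: "finite B" "card B \<le> r"
    and H: "\<forall>e\<in>E. w\<in>e \<longrightarrow> (\<exists>y. e = {w,y} \<and> (y\<in>B \<or> (finite {e\<in>E. y\<in>e} \<and> card {e\<in>E. y\<in>e} \<le> r)))"
    and M: "in_min_deg_subgraph V E w k"
  shows "k \<le> r"
proof (rule ccontr)
  assume nk: "\<not> k \<le> r"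
  from M obtain S F where SF: "S \<subseteq> V" "F \<subseteq> E" "\<forall>e\<in>F. e \<subseteq> S" "w \<in> S"
     "\<forall>u\<in>S. k \<le> card {e\<in>F. u\<in>e}" unfolding in_min_deg_subgraph_def by blast
  have sub: "{e\<in>F. w\<in>e} \<subseteq> (\<lambda>y. {w,y}) ` B"
  proof
    fix e assume e: "e \<in> {e\<in>F. w\<in>e}"
    then obtain y where y: "e = {w,y}" "y\<in>B \<or> (finite {e\<in>E. y\<in>e} \<and> card {e\<in>E. y\<in>e} \<le> r)"
      using H SF(2) by blast
    have yS: "y \<in> S" using SF(3) e y(1) by auto
    have "y \<in> B"
    proof (rule ccontr)
      assume "y \<notin> B"
      then have f: "finite {e\<in>E. y\<in>e}" "card {e\<in>E. y\<in>e} \<le> r" using y(2) by auto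
      have "card {e\<in>F. y\<in>e} \<le> card {e\<in>E. y\<in>e}" using SF(2) by (intro card_mono[OF f(1)]) auto
      moreover have "k \<le> card {e\<in>F. y\<in>e}" using SF(5) yS by auto
      ultimately show False using f(2) nk by linarith
    qed
    then show "e \<in> (\<lambda>y. {w,y}) ` B" using y(1) by auto
  qed
  have "card {e\<in>F. w\<in>e} \<le> card ((\<lambda>y. {w,y}) ` B)"
    by (rule card_mono[OF finite_imageI[OF B(1)] sub])
  also have "\<dots> \<le> card B" by (rule card_image_le[OF B(1)])
  finally have "card {e\<in>F. w\<in>e} \<le> card B" .
  moreover have "k \<le> card {e\<in>F. w\<in>e}" using SF by auto
  ultimately show False using B(2) nk by linarith
qed

lemma core_lower:
  assumes "Sv \<subseteq> V" "w \<in> Sv" "finite Sv"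
    and A: "\<And>u. u \<in> Sv \<Longrightarrow> \<exists>A. A \<subseteq> {e\<in>E. e \<subseteq> Sv \<and> u \<in> e} \<and> finite A \<and> r \<le> card A"
  shows "in_min_deg_subgraph V E w r"
  unfolding in_min_deg_subgraph_def
proof (intro exI conjI)
  show "Sv \<subseteq> V" "w \<in> Sv" by fact+
  show "{e\<in>E. e \<subseteq> Sv} \<subseteq> E" "\<forall>e\<in>{e\<in>E. e \<subseteq> Sv}. e \<subseteq> Sv" by auto
  show "\<forall>u\<in>Sv. r \<le> card {e\<in>{e\<in>E. e \<subseteq> Sv}. u\<in>e}"
  proof
    fix u assume "u \<in> Sv"
    then obtain A where A: "A \<subseteq> {e\<in>E. e \<subseteq> Sv \<and> u \<in> e}" "r \<le> card A" using A by blast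
    have fin: "finite {e\<in>E. e \<subseteq> Sv \<and> u \<in> e}"
      by (rule finite_subset[of _ "Pow Sv"]) (use assms(3) in auto)
    have "card A \<le> card {e\<in>E. e \<subseteq> Sv \<and> u \<in> e}" by (rule card_mono[OF fin A(1)])
    moreover have "{e\<in>{e\<in>E. e \<subseteq> Sv}. u\<in>e} = {e\<in>E. e \<subseteq> Sv \<and> u \<in> e}" by auto
    ultimately show "r \<le> card {e\<in>{e\<in>E. e \<subseteq> Sv}. u\<in>e}" using A(2) by simp
  qed
qed

definition NN :: "nat \<Rightarrow> nat \<Rightarrow> nat" where "NN z d = (z*d+2)*(d+1)"
definition cc :: "nat \<Rightarrow> nat \<Rightarrow> nat" where "cc d j = (j+1)*(d+1)"
definition Pool :: "nat \<Rightarrow> nat \<Rightarrow> nat set set" where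
  "Pool z d = {{d+1+a, d+1+b} | a b. a < NN z d \<and> b < NN z d \<and> a \<noteq> b}"
definition Wd :: "nat \<Rightarrow> nat \<Rightarrow> nat set set" where
  "Wd d n = {{0, d+1+k} | k. k < n}"
definition Boost :: "nat \<Rightarrow> nat set \<Rightarrow> nat \<Rightarrow> nat set set" where
  "Boost d I n = {{Suc i, d+1+k} | i k. i \<in> I \<and> k < n}"
definition E0g where "E0g z d = Pool z d \<union> Wd d (cc d 0)"
definition eg :: "nat \<Rightarrow> nat \<Rightarrow> nat set" where "eg d i = {0, Suc i}"
definition Sg where "Sg d q j = Boost d {i. i < d \<and> q j i} (cc d j + d)"
definition Tg where "Tg d j = Wd d (cc d (Suc j))"
definition Vg where "Vg z d = {..< d+1+NN z d}"

abbreviation Hg where "Hg z d q x j \<equiv> gadget_H (E0g z d) (eg d) d (Sg d q) (Tg d) x j"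

lemma Hg_mem: "e \<in> Hg z d q x j \<longleftrightarrow> e \<in> Pool z d \<or> (\<exists>k<cc d j. e = {0,d+1+k}) \<or>
   (\<exists>i<d. x i \<and> e = {0,Suc i}) \<or> (\<exists>l<j. \<exists>i k. i<d \<and> q l i \<and> k < cc d l + d \<and> e = {Suc i, d+1+k})"
proof (induction j)
  case 0
  then show ?case by (auto simp: E0g_def Wd_def eg_def)
next
  case (Suc j)
  have c: "cc d j \<le> cc d (Suc j)" by (simp add: cc_def)
  have "e \<in> Hg z d q x (Suc j) \<longleftrightarrow> e \<in> Hg z d q x j \<or> e \<in> Sg d q j \<or> e \<in> Tg d j" by simp
  also have "\<dots> \<longleftrightarrow> e \<in> Pool z d \<or> (\<exists>k<cc d j. e = {0,d+1+k}) \<or>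
   (\<exists>i<d. x i \<and> e = {0,Suc i}) \<or> (\<exists>l<j. \<exists>i k. i<d \<and> q l i \<and> k < cc d l + d \<and> e = {Suc i, d+1+k})
   \<or> e \<in> Sg d q j \<or> e \<in> Tg d j" using Suc.IH by simp
  also have "\<dots> \<longleftrightarrow> e \<in> Pool z d \<or> (\<exists>k<cc d (Suc j). e = {0,d+1+k}) \<or>
   (\<exists>i<d. x i \<and> e = {0,Suc i}) \<or> (\<exists>l<Suc j. \<exists>i k. i<d \<and> q l i \<and> k < cc d l + d \<and> e = {Suc i, d+1+k})"
  proof -
    have A: "((\<exists>k<cc d j. e = {0,d+1+k}) \<or> e \<in> Tg d j) \<longleftrightarrow> (\<exists>k<cc d (Suc j). e = {0,d+1+k})"
      using c by (auto simp: Tg_def Wd_def) (metis less_le_trans)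
    have B: "((\<exists>l<j. \<exists>i k. i<d \<and> q l i \<and> k < cc d l + d \<and> e = {Suc i, d+1+k}) \<or> e \<in> Sg d q j)
       \<longleftrightarrow> (\<exists>l<Suc j. \<exists>i k. i<d \<and> q l i \<and> k < cc d l + d \<and> e = {Suc i, d+1+k})"
      by (auto simp: Sg_def Boost_def less_Suc_eq)
    show ?thesis using A B by blast
  qed
  finally show ?case .
qed

lemma cc_NN: assumes "j \<le> z*d" shows "cc d j + d < NN z d"
proof -
  have "(j+1)*(d+1) \<le> (z*d+1)*(d+1)" using assms by (intro mult_le_mono1) simp
  then show ?thesis unfolding cc_def NN_def by (simp add: algebra_simps)
qed

lemma cc_lt: assumes "l < j" shows "cc d l + d \<le> cc d j - 1"
proof -
  have "(l+2)*(d+1) \<le> (j+1)*(d+1)" using assms by (intro mult_le_mono1) simp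
  then show ?thesis unfolding cc_def by (simp add: algebra_simps)
qed

lemma cc_pos: "1 \<le> cc d j" by (simp add: cc_def)

lemma core_G:
  assumes j: "j \<le> z*d" and I: "I \<subseteq> {..<d}"
  shows "core_number (Vg z d) (Hg z d q x j \<union> Boost d I (cc d j + d)) 0 = cc d j + card {i\<in>I. x i}"
proof -
  define G where "G = Hg z d q x j \<union> Boost d I (cc d j + d)"
  define J where "J = {i\<in>I. x i}"
  define r where "r = cc d j + card J"
  have finJ: "finite J" unfolding J_def by (rule finite_subset[of _ "{..<d}"]) (use I in auto)
  have cardJ: "card J \<le> d" unfolding J_def
    using card_mono[of "{..<d}" "{i\<in>I. x i}"] I by auto
  have JI: "J \<subseteq> I" unfolding J_def by auto
  have cN: "cc d j + d < NN z d" by (rule cc_NN[OF j])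
  have Gmem: "e \<in> G \<longleftrightarrow> e \<in> Pool z d \<or> (\<exists>k<cc d j. e = {0,d+1+k}) \<or>
   (\<exists>i<d. x i \<and> e = {0,Suc i}) \<or> (\<exists>l<j. \<exists>i k. i<d \<and> q l i \<and> k < cc d l + d \<and> e = {Suc i, d+1+k})
   \<or> (\<exists>i k. i \<in> I \<and> k < cc d j + d \<and> e = {Suc i, d+1+k})" for e
    unfolding G_def Un_iff Hg_mem Boost_def by blast
  have low: "in_min_deg_subgraph (Vg z d) G 0 r"
  proof (rule core_lower)
    define Sv where "Sv = {0} \<union> (\<lambda>a. d+1+a) ` {..<NN z d} \<union> Suc ` J"
    show "Sv \<subseteq> Vg z d" unfolding Sv_def Vg_def using JI I by auto
    show "0 \<in> Sv" unfolding Sv_def by simp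
    show "finite Sv" unfolding Sv_def using finJ by simp
    fix u assume "u \<in> Sv"
    then consider "u = 0" | a where "a < NN z d" "u = d+1+a" | i where "i \<in> J" "u = Suc i"
      unfolding Sv_def by blast
    then show "\<exists>A. A \<subseteq> {e\<in>G. e \<subseteq> Sv \<and> u \<in> e} \<and> finite A \<and> r \<le> card A"
    proof cases
      case 1
      define A where "A = (\<lambda>k. {0,d+1+k}) ` {..<cc d j} \<union> (\<lambda>i. {0,Suc i}) ` J"
      have "A \<subseteq> {e\<in>G. e \<subseteq> Sv \<and> u \<in> e}"
      proof
        fix e assume "e \<in> A"
        then consider k where "k < cc d j" "e = {0,d+1+k}" | i where "i \<in> J" "e = {0, Suc i}"
          unfolding A_def by blast
        then show "e \<in> {e\<in>G. e \<subseteq> Sv \<and> u \<in> e}"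
        proof cases
          case 1
          have "e \<in> G" using Gmem[of e] 1 by blast
          moreover have "e \<subseteq> Sv" using 1 cN unfolding Sv_def by auto
          ultimately show ?thesis using \<open>u = 0\<close> 1 by simp
        next
          case 2
          then have "i < d" "x i" using JI I J_def by auto
          then have "e \<in> G" using Gmem[of e] 2 by blast
          moreover have "e \<subseteq> Sv" using 2 unfolding Sv_def by auto
          ultimately show ?thesis using \<open>u = 0\<close> 2 by simp
        qed
      qed
      moreover have "card A = r"
      proof -
        have "card ((\<lambda>k. {0::nat,d+1+k}) ` {..<cc d j}) = cc d j"
          by (subst card_image) (auto simp: inj_on_def doubleton_eq_iff)
        moreover have "card ((\<lambda>i. {0::nat,Suc i}) ` J) = card J"
          by (subst card_image) (auto simp: inj_on_def doubleton_eq_iff)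
        moreover have "(\<lambda>k. {0::nat,d+1+k}) ` {..<cc d j} \<inter> (\<lambda>i. {0,Suc i}) ` J = {}"
          using JI I by (auto simp: doubleton_eq_iff)
        ultimately show ?thesis unfolding A_def r_def
          by (subst card_Un_disjoint) (use finJ in auto)
      qed
      moreover have "finite A" unfolding A_def using finJ by simp
      ultimately show ?thesis by (intro exI[of _ A]) simp
    next
      case 2
      define A where "A = (\<lambda>b. {d+1+a, d+1+b}) ` ({..<NN z d} - {a})"
      have "A \<subseteq> {e\<in>G. e \<subseteq> Sv \<and> u \<in> e}"
      proof
        fix e assume "e \<in> A"
        then obtain b where b: "b < NN z d" "b \<noteq> a" "e = {d+1+a, d+1+b}" unfolding A_def by blast
        then have "e \<in> Pool z d" unfolding Pool_def using 2 by blast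
        then have "e \<in> G" using Gmem[of e] by blast
        moreover have "e \<subseteq> Sv" using b 2 unfolding Sv_def by auto
        ultimately show "e \<in> {e\<in>G. e \<subseteq> Sv \<and> u \<in> e}" using b 2 by simp
      qed
      moreover have "card A = NN z d - 1"
        unfolding A_def using 2 by (subst card_image) (auto simp: inj_on_def doubleton_eq_iff)
      moreover have "r \<le> NN z d - 1" unfolding r_def using cN cardJ by linarith
      moreover have "finite A" unfolding A_def by simp
      ultimately show ?thesis by (intro exI[of _ A]) simp
    next
      case 3
      define A where "A = (\<lambda>k. {Suc i, d+1+k}) ` {..<cc d j + d}"
      have "A \<subseteq> {e\<in>G. e \<subseteq> Sv \<and> u \<in> e}"
      proof
        fix e assume "e \<in> A"
        then obtain k where k: "k < cc d j + d" "e = {Suc i, d+1+k}" unfolding A_def by blast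
        then have "e \<in> G" using Gmem[of e] 3 JI by blast
        moreover have "d+1+k \<in> Sv" unfolding Sv_def using k cN by auto
        moreover have "Suc i \<in> Sv" unfolding Sv_def using 3 by auto
        ultimately show "e \<in> {e\<in>G. e \<subseteq> Sv \<and> u \<in> e}" using k 3 by auto
      qed
      moreover have "card A = cc d j + d"
        unfolding A_def by (subst card_image) (auto simp: inj_on_def doubleton_eq_iff)
      moreover have "r \<le> cc d j + d" unfolding r_def using cardJ by linarith
      moreover have "finite A" unfolding A_def by simp
      ultimately show ?thesis by (intro exI[of _ A]) simp
    qed
  qed
  have up: "k \<le> r" if "in_min_deg_subgraph (Vg z d) G 0 k" for k
  proof (rule core_upper[OF _ _ _ that])
    define B where "B = (\<lambda>k. d+1+k) ` {..<cc d j} \<union> Suc ` J"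
    show "finite B" unfolding B_def using finJ by simp
    have "card B \<le> card ((\<lambda>k. d+1+k) ` {..<cc d j}) + card (Suc ` J)"
      unfolding B_def by (rule card_Un_le)
    also have "\<dots> \<le> cc d j + card J"
      using card_image_le[of "{..<cc d j}" "\<lambda>k. d+1+k"] card_image_le[OF finJ, of Suc] by simp
    finally show "card B \<le> r" unfolding r_def .
    have deg: "finite {e\<in>G. Suc i \<in> e} \<and> card {e\<in>G. Suc i \<in> e} \<le> r" if i: "i < d" "i \<notin> I" for i
    proof -
      have sub: "{e\<in>G. Suc i \<in> e} \<subseteq> (\<lambda>k. {Suc i, d+1+k}) ` {..<cc d j - 1} \<union> {{0,Suc i}}"
      proof
        fix e assume e: "e \<in> {e\<in>G. Suc i \<in> e}"
        then have eG: "e \<in> G" and si: "Suc i \<in> e" by auto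
        from eG[unfolded Gmem] show "e \<in> (\<lambda>k. {Suc i, d+1+k}) ` {..<cc d j - 1} \<union> {{0,Suc i}}"
        proof (elim disjE exE conjE)
          assume "e \<in> Pool z d" then show ?thesis using si i unfolding Pool_def by auto
        next
          fix k assume "e = {0, d+1+k}" then show ?thesis using si i by auto
        next
          fix i' assume "e = {0, Suc i'}" then show ?thesis using si by auto
        next
          fix l i' k assume h: "l < j" "k < cc d l + d" "e = {Suc i', d+1+k}"
          then have "i' = i" using si i by auto
          moreover have "k < cc d j - 1" using cc_lt[OF h(1), of d] h(2) by linarith
          ultimately show ?thesis using h by auto
        next
          fix i' k assume h: "i' \<in> I" "e = {Suc i', d+1+k}"
          then show ?thesis using si i by auto
        qed
      qed
      have fin: "finite ((\<lambda>k. {Suc i, d+1+k}) ` {..<cc d j - 1} \<union> {{0,Suc i}})" by simp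
      have "card {e\<in>G. Suc i \<in> e} \<le> card ((\<lambda>k. {Suc i, d+1+k}) ` {..<cc d j - 1} \<union> {{0,Suc i}})"
        by (rule card_mono[OF fin sub])
      also have "\<dots> \<le> card ((\<lambda>k. {Suc i, d+1+k}) ` {..<cc d j - 1}) + card {{0::nat,Suc i}}"
        by (rule card_Un_le)
      also have "\<dots> \<le> (cc d j - 1) + 1"
        using card_image_le[of "{..<cc d j - 1}" "\<lambda>k. {Suc i, d+1+k}"] by simp
      also have "\<dots> \<le> r" using cc_pos[of d j] unfolding r_def by linarith
      finally show ?thesis using finite_subset[OF sub fin] by simp
    qed
    show "\<forall>e\<in>G. 0\<in>e \<longrightarrow> (\<exists>y. e = {0,y} \<and> (y\<in>B \<or> (finite {e\<in>G. y\<in>e} \<and> card {e\<in>G. y\<in>e} \<le> r)))"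
    proof (intro ballI impI)
      fix e assume eG: "e \<in> G" and z0: "(0::nat) \<in> e"
      from eG[unfolded Gmem] show "\<exists>y. e = {0,y} \<and> (y\<in>B \<or> (finite {e\<in>G. y\<in>e} \<and> card {e\<in>G. y\<in>e} \<le> r))"
      proof (elim disjE exE conjE)
        assume "e \<in> Pool z d" then show ?thesis using z0 unfolding Pool_def by auto
      next
        fix k assume "k < cc d j" "e = {0, d+1+k}" then show ?thesis unfolding B_def by auto
      next
        fix i assume h: "i < d" "x i" "e = {0, Suc i}"
        show ?thesis
        proof (cases "i \<in> I")
          case True then have "Suc i \<in> B" unfolding B_def J_def using h by auto
          then show ?thesis using h by auto
        next
          case False then show ?thesis using h deg by auto
        qed
      next
        fix l i' k assume h: "e = {Suc i', d+1+k}" then show ?thesis using z0 by auto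
      next
        fix i' k assume h: "e = {Suc i', d+1+k}" then show ?thesis using z0 by auto
      qed
    qed
  qed
  have "core_number (Vg z d) G 0 = r" by (rule core_eqI[OF low up])
  then show ?thesis unfolding G_def J_def r_def .
qed

lemma Boost_empty: "Boost d {} n = {}" by (simp add: Boost_def)

lemma card_Pool: "card (Pool z d) \<le> NN z d * NN z d"
proof -
  have "Pool z d \<subseteq> (\<lambda>(a,b). {d+1+a, d+1+b}) ` ({..<NN z d} \<times> {..<NN z d})"
    unfolding Pool_def by auto
  then have "card (Pool z d) \<le> card ((\<lambda>(a,b). {d+1+a, d+1+b}) ` ({..<NN z d} \<times> {..<NN z d}))"
    by (intro card_mono) auto
  also have "\<dots> \<le> card ({..<NN z d} \<times> {..<NN z d})" by (rule card_image_le) simp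
  finally show ?thesis by (simp add: card_cartesian_product)
qed

lemma card_Wd: "card (Wd d n) \<le> n"
proof -
  have "Wd d n = (\<lambda>k. {0, d+1+k}) ` {..<n}" unfolding Wd_def by auto
  then show ?thesis using card_image_le[of "{..<n}" "\<lambda>k. {0, d+1+k}"] by simp
qed

lemma card_Boost: assumes "I \<subseteq> {..<d}" shows "card (Boost d I n) \<le> d * n"
proof -
  have "Boost d I n \<subseteq> (\<lambda>(i,k). {Suc i, d+1+k}) ` ({..<d} \<times> {..<n})"
    unfolding Boost_def using assms by auto
  then have "card (Boost d I n) \<le> card ((\<lambda>(i,k). {Suc i, d+1+k}) ` ({..<d} \<times> {..<n}))"
    by (intro card_mono) auto
  also have "\<dots> \<le> card ({..<d} \<times> {..<n})" by (rule card_image_le) simp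
  finally show ?thesis by (simp add: card_cartesian_product)
qed

definition nvf :: "nat \<Rightarrow> nat \<Rightarrow> nat" where "nvf z d = d + 1 + NN z d"
definition tf :: "nat \<Rightarrow> nat \<Rightarrow> nat" where
  "tf z d = ((z+2)*(z+2) + z*(z+2) + 2) * (d+1)^4"

lemma NN_le: "NN z d \<le> (z+2)*(d+1)^2"
proof -
  have "z*d+2 \<le> (z+2)*(d+1)" by (simp add: algebra_simps)
  then have "(z*d+2)*(d+1) \<le> (z+2)*(d+1)*(d+1)" by (rule mult_le_mono1)
  then show ?thesis unfolding NN_def power2_eq_square by (simp only: mult.assoc)
qed

lemma tf_bound:
  fixes z d :: nat
  defines "N \<equiv> NN z d"
  shows "N*N + (d+1) + d + z*d*(d*N + N) \<le> tf z d"
proof -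
  define K where "K = z+2"
  define D where "D = d+1"
  have NK: "N \<le> K*D^2" unfolding N_def K_def D_def by (rule NN_le)
  have a: "N*N \<le> (K*K)*D^4"
  proof -
    have "N*N \<le> (K*D^2)*(K*D^2)" using NK by (intro mult_le_mono) auto
    then show ?thesis by (simp add: power_mult_distrib algebra_simps power2_eq_square power4_eq_xxxx)
  qed
  have b: "z*d*(d*N + N) \<le> (z*K)*D^4"
  proof -
    have "z*d*(d*N+N) = z*d*(D*N)" unfolding D_def by (simp add: algebra_simps)
    also have "\<dots> \<le> z*D*(D*(K*D^2))" using NK unfolding D_def
      by (intro mult_le_mono) auto
    also have "\<dots> = (z*K)*D^4" by (simp add: power2_eq_square power4_eq_xxxx algebra_simps)
    finally show ?thesis .
  qed
  have c: "(d+1) + d \<le> 2*D^4"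
  proof -
    have "D^1 \<le> D^4" by (rule power_increasing) (auto simp: D_def)
    then have "D \<le> D^4" by simp
    then show ?thesis unfolding D_def by linarith
  qed
  have "tf z d = (K*K)*D^4 + (z*K)*D^4 + 2*D^4" unfolding tf_def K_def D_def by (simp add: algebra_simps)
  then show ?thesis using a b c by linarith
qed

lemma bit_inner_card: "bit_inner d x p = real (card {i\<in>{i. i < d \<and> p i}. x i})"
proof -
  have "bit_inner d x p = (\<Sum>i<d. of_bool (x i \<and> p i))" unfolding bit_inner_def
    by (intro sum.cong) auto
  also have "\<dots> = real (card ({..<d} \<inter> {i. x i \<and> p i}))" by simp
  also have "{..<d} \<inter> {i. x i \<and> p i} = {i\<in>{i. i < d \<and> p i}. x i}" by auto
  finally show ?thesis .
qed

lemma gadget_part: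
  fixes z d :: nat
  shows "\<exists>V E0 e w.
        finite V \<and> card V = nvf z d \<and> w \<in> V \<and> E0 \<subseteq> edges_on V \<and>
        (\<forall>i<d. e i \<in> edges_on V) \<and>
        (\<forall>q :: nat \<Rightarrow> nat \<Rightarrow> bool. \<exists>S T dec.
            (\<forall>j < z * d. S j \<subseteq> edges_on V \<and> T j \<subseteq> edges_on V) \<and>
            (\<forall>j < z * d. \<forall>a \<in> {(\<lambda>V E w. real (core_number V E w)) V' E' w' | V' E' w'. True}. \<forall>b \<in> {(\<lambda>V E w. real (core_number V E w)) V' E' w' | V' E' w'. True}.
                 \<bar>dec j a - dec j b\<bar> \<le> \<bar>a - b\<bar>) \<and>
            (\<forall>j < z * d. \<forall>x :: nat \<Rightarrow> bool.
                 dec j ((\<lambda>V E w. real (core_number V E w)) V (gadget_Q E0 e d S T x j) w) - dec j ((\<lambda>V E w. real (core_number V E w)) V (gadget_H E0 e d S T x j) w)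
                   = bit_inner d x (q j)) \<and>
            card E0 + d + (\<Sum>j < z * d. card (S j) + card (T j)) \<le> tf z d)"
proof (rule exI[of _ "Vg z d"], rule exI[of _ "E0g z d"], rule exI[of _ "eg d"], rule exI[of _ 0], intro conjI allI)
  define N where "N = NN z d"
  have cN0: "cc d 0 \<le> N" using cc_NN[of 0 z d] unfolding N_def by simp
  show "finite (Vg z d)" unfolding Vg_def by simp
  show "card (Vg z d) = nvf z d" unfolding Vg_def nvf_def by simp
  show "(0::nat) \<in> Vg z d" unfolding Vg_def by simp
  show "E0g z d \<subseteq> edges_on (Vg z d)"
  proof
    fix e assume "e \<in> E0g z d"
    then consider a b where "a < N" "b < N" "a \<noteq> b" "e = {d+1+a, d+1+b}"
      | k where "k < cc d 0" "e = {0, d+1+k}"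
      unfolding E0g_def Pool_def Wd_def N_def by blast
    then show "e \<in> edges_on (Vg z d)"
      by cases (use cN0 in \<open>auto simp: edges_on_def Vg_def N_def\<close>)
  qed
  fix i show "i < d \<longrightarrow> eg d i \<in> edges_on (Vg z d)"
    by (auto simp: eg_def edges_on_def Vg_def)
  fix q :: "nat \<Rightarrow> nat \<Rightarrow> bool"
  show "\<exists>S T dec.
            (\<forall>j < z * d. S j \<subseteq> edges_on (Vg z d) \<and> T j \<subseteq> edges_on (Vg z d)) \<and>
            (\<forall>j < z * d. \<forall>a \<in> {(\<lambda>V E w. real (core_number V E w)) V' E' w' | V' E' w'. True}. \<forall>b \<in> {(\<lambda>V E w. real (core_number V E w)) V' E' w' | V' E' w'. True}.
                 \<bar>dec j a - dec j b\<bar> \<le> \<bar>a - b\<bar>) \<and>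
            (\<forall>j < z * d. \<forall>x :: nat \<Rightarrow> bool.
                 dec j ((\<lambda>V E w. real (core_number V E w)) (Vg z d) (gadget_Q (E0g z d) (eg d) d S T x j) 0) - dec j ((\<lambda>V E w. real (core_number V E w)) (Vg z d) (gadget_H (E0g z d) (eg d) d S T x j) 0)
                   = bit_inner d x (q j)) \<and>
            card (E0g z d) + d + (\<Sum>j < z * d. card (S j) + card (T j)) \<le> tf z d"
  proof (rule exI[of _ "Sg d q"], rule exI[of _ "Tg d"], rule exI[of _ "\<lambda>j a. a"], intro conjI allI impI ballI)
    fix j assume j: "j < z*d"
    have cj: "cc d j + d < N" using cc_NN[of j z d] j unfolding N_def by simp
    show "Sg d q j \<subseteq> edges_on (Vg z d)"
      using cj by (auto simp: Sg_def Boost_def edges_on_def Vg_def N_def)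
  next
    fix j assume j: "j < z*d"
    have cj: "cc d j + d < N" using cc_NN[of j z d] j unfolding N_def by simp
    have "cc d (Suc j) = cc d j + d + 1" by (simp add: cc_def)
    then have cj': "cc d (Suc j) \<le> N" using cj by simp
    show "Tg d j \<subseteq> edges_on (Vg z d)"
      using cj' by (auto simp: Tg_def Wd_def edges_on_def Vg_def N_def)
  next
    fix j :: nat and a b :: real
    show "\<bar>a - b\<bar> \<le> \<bar>a - b\<bar>" by simp
  next
    fix j x assume j: "j < z*d"
    have I: "{i. i < d \<and> q j i} \<subseteq> {..<d}" by auto
    have "core_number (Vg z d) (gadget_Q (E0g z d) (eg d) d (Sg d q) (Tg d) x j) 0
        = cc d j + card {i\<in>{i. i < d \<and> q j i}. x i}"
      unfolding gadget_Q_def Sg_def using core_G[of j z d "{i. i < d \<and> q j i}" q x] j I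
      unfolding Sg_def by simp
    moreover have "core_number (Vg z d) (gadget_H (E0g z d) (eg d) d (Sg d q) (Tg d) x j) 0 = cc d j"
      using core_G[of j z d "{}" q x] j by (simp add: Boost_empty)
    ultimately show "real (core_number (Vg z d) (gadget_Q (E0g z d) (eg d) d (Sg d q) (Tg d) x j) 0) -
         real (core_number (Vg z d) (gadget_H (E0g z d) (eg d) d (Sg d q) (Tg d) x j) 0) =
         bit_inner d x (q j)" by (simp add: bit_inner_card)
  next
    have e0: "card (E0g z d) \<le> N*N + (d+1)"
    proof -
      have "card (E0g z d) \<le> card (Pool z d) + card (Wd d (cc d 0))"
        unfolding E0g_def by (rule card_Un_le)
      then show ?thesis using card_Pool[of z d] card_Wd[of d "cc d 0"] unfolding N_def
        by (simp add: cc_def)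
    qed
    have st: "card (Sg d q j) + card (Tg d j) \<le> d*N + N" if j: "j \<in> {..<z*d}" for j
    proof -
      have cj: "cc d j + d < N" using cc_NN[of j z d] j unfolding N_def by simp
      have "cc d (Suc j) = cc d j + d + 1" by (simp add: cc_def)
      then have cj': "cc d (Suc j) \<le> N" using cj by simp
      have "card (Sg d q j) \<le> d * (cc d j + d)" unfolding Sg_def by (rule card_Boost) auto
      also have "\<dots> \<le> d * N" using cj by simp
      finally have "card (Sg d q j) \<le> d*N" .
      moreover have "card (Tg d j) \<le> N" unfolding Tg_def using card_Wd cj' le_trans by blast
      ultimately show ?thesis by linarith
    qed
    have "(\<Sum>j < z * d. card (Sg d q j) + card (Tg d j)) \<le> of_nat (card {..<z*d}) * (d*N + N)"
      by (rule sum_bounded_above) (rule st)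
    then have "(\<Sum>j < z * d. card (Sg d q j) + card (Tg d j)) \<le> z*d*(d*N + N)" by simp
    then show "card (E0g z d) + d + (\<Sum>j < z * d. card (Sg d q j) + card (Tg d j)) \<le> tf z d"
      using e0 tf_bound[of z d] unfolding N_def by linarith
  qed
qed

lemma mono_nvf: "mono (nvf z)"
proof (rule monoI)
  fix a b :: nat assume "a \<le> b"
  have "z*a+2 \<le> z*b+2" using \<open>a \<le> b\<close> by simp
  then have "(z*a+2)*(a+1) \<le> (z*b+2)*(b+1)" using \<open>a \<le> b\<close> by (intro mult_le_mono) auto
  then show "nvf z a \<le> nvf z b" unfolding nvf_def NN_def using \<open>a \<le> b\<close> by linarith
qed

lemma mono_tf: "mono (tf z)"
proof (rule monoI)
  fix a b :: nat assume "a \<le> b"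
  then have "(a+1)^4 \<le> (b+1)^4" by (intro power_mono) auto
  then show "tf z a \<le> tf z b" unfolding tf_def by (intro mult_le_mono2)
qed

lemma nvf_bigo: "(\<lambda>d. real (nvf z d)) \<in> O(\<lambda>d. real d ^ 2)"
proof (rule bigoI[where c = "real (4*(z+3))"])
  show "\<forall>\<^sub>F d in at_top. norm (real (nvf z d)) \<le> real (4*(z+3)) * norm (real d ^ 2)"
    unfolding eventually_at_top_linorder
  proof (intro exI[of _ 1] allI impI)
    fix d :: nat assume d: "1 \<le> d"
    have h1: "nvf z d \<le> (z+2)*(d+1)^2 + (d+1)" unfolding nvf_def using NN_le[of z d] by linarith
    have h2: "d+1 \<le> (d+1)^2" by (simp add: power2_eq_square)
    have h3: "(z+3)*(d+1)^2 = (z+2)*(d+1)^2 + (d+1)^2" by (simp add: algebra_simps)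
    have "(d+1)^2 \<le> (2*d)^2" using d by (intro power_mono) auto
    then have h4: "(z+3)*(d+1)^2 \<le> (z+3)*(2*d)^2" by (intro mult_le_mono2)
    have h5: "(z+3)*(2*d)^2 = 4*(z+3)*d^2" by (simp add: power_mult_distrib)
    have "nvf z d \<le> 4*(z+3)*d^2" using h1 h2 h3 h4 h5 by linarith
    then have "real (nvf z d) \<le> real (4*(z+3)*d^2)" by (intro of_nat_mono)
    then show "norm (real (nvf z d)) \<le> real (4*(z+3)) * norm (real d ^ 2)" by simp
  qed
qed

lemma tf_bigo: "(\<lambda>d. real (tf z d)) \<in> O(\<lambda>d. real d ^ 4)"
proof (rule bigoI[where c = "real (16*((z+2)*(z+2) + z*(z+2) + 2))"])
  show "\<forall>\<^sub>F d in at_top. norm (real (tf z d)) \<le> real (16*((z+2)*(z+2) + z*(z+2) + 2)) * norm (real d ^ 4)"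
    unfolding eventually_at_top_linorder
  proof (intro exI[of _ 1] allI impI)
    fix d :: nat assume d: "1 \<le> d"
    define C where "C = (z+2)*(z+2) + z*(z+2) + 2"
    have "(d+1)^4 \<le> (2*d)^4" using d by (intro power_mono) auto
    then have "tf z d \<le> C*(2*d)^4" unfolding tf_def C_def by (intro mult_le_mono2)
    also have "\<dots> = 16*C*d^4" by (simp add: power_mult_distrib)
    finally have "real (tf z d) \<le> real (16*C*d^4)" by (intro of_nat_mono)
    then show "norm (real (tf z d)) \<le> real (16*((z+2)*(z+2) + z*(z+2) + 2)) * norm (real d ^ 4)"
      unfolding C_def by simp
  qed
qed

theorem mainTheorem4:
  fixes \<zeta> :: nat
  shows "\<exists>nv t. ext_AND_gadget (\<lambda>V E w. real (core_number V E w)) \<zeta> nv t \<and>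
            (\<lambda>d. real (nv d)) \<in> O(\<lambda>d. real d ^ 2) \<and>
            (\<lambda>d. real (t d)) \<in> O(\<lambda>d. real d ^ 4)"
proof (rule exI[of _ "nvf \<zeta>"], rule exI[of _ "tf \<zeta>"], intro conjI)
  show "(\<lambda>d. real (nvf \<zeta> d)) \<in> O(\<lambda>d. real d ^ 2)" by (rule nvf_bigo)
  show "(\<lambda>d. real (tf \<zeta> d)) \<in> O(\<lambda>d. real d ^ 4)" by (rule tf_bigo)
  show "ext_AND_gadget (\<lambda>V E w. real (core_number V E w)) \<zeta> (nvf \<zeta>) (tf \<zeta>)"
    unfolding ext_AND_gadget_def
  proof (intro conjI allI)
    fix d show "0 < nvf \<zeta> d" unfolding nvf_def by simp
  next
    fix d show "0 < tf \<zeta> d" unfolding tf_def by simp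
  next
    show "mono (nvf \<zeta>)" by (rule mono_nvf)
    show "mono (tf \<zeta>)" by (rule mono_tf)
  next
    fix d show "\<exists>V E0 e w.
        finite V \<and> card V = nvf \<zeta> d \<and> w \<in> V \<and> E0 \<subseteq> edges_on V \<and>
        (\<forall>i<d. e i \<in> edges_on V) \<and>
        (\<forall>q :: nat \<Rightarrow> nat \<Rightarrow> bool. \<exists>S T dec.
            (\<forall>j < \<zeta> * d. S j \<subseteq> edges_on V \<and> T j \<subseteq> edges_on V) \<and>
            (\<forall>j < \<zeta> * d. \<forall>a \<in> {(\<lambda>V E w. real (core_number V E w)) V' E' w' | V' E' w'. True}. \<forall>b \<in> {(\<lambda>V E w. real (core_number V E w)) V' E' w' | V' E' w'. True}.
                 \<bar>dec j a - dec j b\<bar> \<le> \<bar>a - b\<bar>) \<and>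
            (\<forall>j < \<zeta> * d. \<forall>x :: nat \<Rightarrow> bool.
                 dec j ((\<lambda>V E w. real (core_number V E w)) V (gadget_Q E0 e d S T x j) w) - dec j ((\<lambda>V E w. real (core_number V E w)) V (gadget_H E0 e d S T x j) w)
                   = bit_inner d x (q j)) \<and>
            card E0 + d + (\<Sum>j < \<zeta> * d. card (S j) + card (T j)) \<le> tf \<zeta> d)"
      by (rule gadget_part)
  qed
qed

end
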